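(* For every $p\in(0,1)$ and $q\in[p,1]$, \[\mathrm{aa}_p^q(2)\ge\Big(\frac{2\cdot2^{p/q}}{2^p\big(2-(2-2^p)^{q/p}\big)^{p/q}+2(2-2^p)}\Big)^{1/p}.\] In particular, $\mathrm{aa}_p(2)\ge\frac{4}{4+2^p(2^p-2)}$, and if $p\in(0,1)$ satisfies \[\frac{2^{p+1}}{4+2^p\big((2-(2-2^p)^{1/p})^p-2\big)}>1,\] then $\mathrm{aa}_p^1(2)>1$ (which is the case, e.g., for $p=2/3$).
   Context: For $r\in(0,1]$, an $r$-metric space is a set with $d$ such that $d^r$ is a metric; pointed means a distinguished point $0$. A $p$-Banach space is a complete vector space with a $p$-norm. For a pointed $p$-metric space $\mathcal M$, $\delta(x)$ is evaluation at $x$ on real functions vanishing at $0$, and $\mathcal F_p(\mathcal M)$ is the completion of $\mathrm{span}\{\delta(x)\}$ under $\|\sum a_i\delta(x_i)\|=\sup\|\sum a_if(x_i)\|_Y$ over $p$-Banach $Y$ and $1$-Lipschitz $f:\mathcal M\to Y$ with $f(0)=0$. For $0\in\mathcal N\subset\mathcal M$, $L_j$ is the linear map $\delta_{\mathcal N}(x)\mapsto\delta_{\mathcal M}(x)$ and $\mathrm{amen}_p(\mathcal N,\mathcal M)=\|L_j^{-1}\|$ if $L_j$ is an isomorphism onto its range ($+\infty$ otherwise). $\mathrm{aa}_p^q(n)=\sup\{\mathrm{amen}_p(\mathcal N,\mathcal M'):\mathcal N$ a pointed $q$-metric space with $|\mathcal N\setminus\{0\}|\le n$, $\mathcal M'\supset\mathcal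 N$ any $q$-metric space$\}$, and $\mathrm{aa}_p(n)=\mathrm{aa}_p^p(n)$. *)

theory Defs
  imports Complex_Main "HOL-Library.Extended_Real" "HOL-Library.Infinite_Typeclass"
begin

definition rmetric :: "real \<Rightarrow> 'a set \<Rightarrow> ('a \<Rightarrow> 'a \<Rightarrow> real) \<Rightarrow> bool" where
  "rmetric r M d \<longleftrightarrow>
     (\<forall>x\<in>M. \<forall>y\<in>M. 0 \<le> d x y \<and> (d x y = 0 \<longleftrightarrow> x = y) \<and> d x y = d y x) \<and>
     (\<forall>x\<in>M. \<forall>y\<in>M. \<forall>w\<in>M. d x w powr r \<le> d x y powr r + d y w powr r)"

definition pointed_rmetric :: "real \<Rightarrow> 'a set \<Rightarrow> ('a \<Rightarrow> 'a \<Rightarrow> real) \<Rightarrow> 'a \<Rightarrow> bool" where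
  "pointed_rmetric r M d z \<longleftrightarrow> rmetric r M d \<and> z \<in> M"

text \<open>span{delta(x) : x in M}: finitely supported real functions on M - {z}
  (mu represents sum_x mu x * delta(x)); delta(z) = 0.\<close>
definition molecules :: "'a set \<Rightarrow> 'a \<Rightarrow> ('a \<Rightarrow> real) set" where
  "molecules M z = {\<mu>. finite {x. \<mu> x \<noteq> 0} \<and> {x. \<mu> x \<noteq> 0} \<subseteq> M - {z}}"

definition dirac :: "'a \<Rightarrow> 'a \<Rightarrow> ('a \<Rightarrow> real)" where
  "dirac z x = (\<lambda>y. if y = x \<and> x \<noteq> z then 1 else 0)"

definition p_seminorm_on :: "real \<Rightarrow> ('a \<Rightarrow> real) set \<Rightarrow> (('a \<Rightarrow> real) \<Rightarrow> real) \<Rightarrow> bool" where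
  "p_seminorm_on p V N \<longleftrightarrow>
     (\<forall>\<mu>\<in>V. 0 \<le> N \<mu>) \<and>
     (\<forall>c. \<forall>\<mu>\<in>V. N (\<lambda>y. c * \<mu> y) = \<bar>c\<bar> * N \<mu>) \<and>
     (\<forall>\<mu>\<in>V. \<forall>\<nu>\<in>V. N (\<lambda>y. \<mu> y + \<nu> y) powr p \<le> N \<mu> powr p + N \<nu> powr p)"

text \<open>A p-seminorm on the span of the deltas with ||delta x - delta y|| \<le> d x y
  is exactly mu \<mapsto> ||sum mu(x) f(x)||_Y for some p-Banach space Y and 1-Lipschitz
  f with f(z) = 0 (up to quotient and completion).\<close>
definition admissible :: "real \<Rightarrow> 'a set \<Rightarrow> ('a \<Rightarrow> 'a \<Rightarrow> real) \<Rightarrow> 'a \<Rightarrow> (('a \<Rightarrow> real) \<Rightarrow> real) \<Rightarrow> bool" where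
  "admissible p M d z N \<longleftrightarrow>
     p_seminorm_on p (molecules M z) N \<and>
     (\<forall>x\<in>M. \<forall>y\<in>M. N (\<lambda>w. dirac z x w - dirac z y w) \<le> d x y)"

definition Fp_norm :: "real \<Rightarrow> 'a set \<Rightarrow> ('a \<Rightarrow> 'a \<Rightarrow> real) \<Rightarrow> 'a \<Rightarrow> ('a \<Rightarrow> real) \<Rightarrow> real" where
  "Fp_norm p M d z \<mu> = Sup {N \<mu> | N. admissible p M d z N}"

text \<open>amen_p(N,M) = ||L_j^{-1}|| if L_j is an isomorphism onto its range, +\<infinity> otherwise.
  (By density, L_j is an isomorphism onto its range iff it is bounded below on span{delta}.)\<close>
definition amen :: "real \<Rightarrow> 'a set \<Rightarrow> 'a set \<Rightarrow> ('a \<Rightarrow> 'a \<Rightarrow> real) \<Rightarrow> 'a \<Rightarrow> ereal" where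
  "amen p N M d z =
     (if \<exists>C. \<forall>\<mu>\<in>molecules N z. Fp_norm p N d z \<mu> \<le> C * Fp_norm p M d z \<mu>
      then Sup ({0} \<union> {ereal (Fp_norm p N d z \<mu> / Fp_norm p M d z \<mu>) | \<mu>.
                         \<mu> \<in> molecules N z \<and> (\<exists>x. \<mu> x \<noteq> 0)})
      else \<infinity>)"

text \<open>aa_p^q(n), with all spaces taken inside the (infinite) type 'a.\<close>
definition aa :: "'a itself \<Rightarrow> real \<Rightarrow> real \<Rightarrow> nat \<Rightarrow> ereal" where
  "aa _ p q n = Sup {amen p N M d z | (N :: 'a set) M d z.
      pointed_rmetric q N d z \<and> finite (N - {z}) \<and> card (N - {z}) \<le> n \<and>
      rmetric q M d \<and> N \<subseteq> M}"

end

theory Submission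
  imports Defs "HOL-Analysis.Convex"
begin

lemma powr_subadd:
  fixes u v p :: real
  assumes p: "0 < p" "p \<le> 1" and uv: "0 \<le> u" "0 \<le> v"
  shows "(u + v) powr p \<le> u powr p + v powr p"
proof (cases "u + v = 0")
  case True
  then show ?thesis using uv by simp
next
  case False
  define s where "s = u + v"
  have s: "0 < s" using False uv s_def by simp
  have "u / s \<le> (u / s) powr p"
    using powr_mono'[of p 1 "u/s"] p uv s s_def by (simp add: divide_le_eq_1)
  moreover have "v / s \<le> (v / s) powr p"
    using powr_mono'[of p 1 "v/s"] p uv s s_def by (simp add: divide_le_eq_1)
  ultimately have "u / s + v / s \<le> u powr p / s powr p + v powr p / s powr p"
    using s uv by (simp add: powr_divide)
  moreover have "u / s + v / s = 1" using s s_def by (simp add: add_divide_distrib[symmetric])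
  ultimately have "1 \<le> (u powr p + v powr p) / s powr p" by (simp add: add_divide_distrib)
  then show ?thesis using s s_def by (simp add: le_divide_eq)
qed

lemma abs_powr_subadd:
  fixes u v p :: real
  assumes p: "0 < p" "p \<le> 1"
  shows "\<bar>u + v\<bar> powr p \<le> \<bar>u\<bar> powr p + \<bar>v\<bar> powr p"
proof -
  have "\<bar>u + v\<bar> powr p \<le> (\<bar>u\<bar> + \<bar>v\<bar>) powr p"
    using p by (intro powr_mono2) auto
  also have "\<dots> \<le> \<bar>u\<bar> powr p + \<bar>v\<bar> powr p" using powr_subadd[OF p] by simp
  finally show ?thesis .
qed

lemma chord_powr:
  fixes p t :: real
  assumes p: "0 < p" "p \<le> 1" and t: "0 \<le> t" "t \<le> 1"
  shows "1 + (2 powr p - 1) * t \<le> (1 + t) powr p"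
proof -
  have cv: "convex_on {0<..} (\<lambda>x. x powr (1/p))" using p by (intro powr_convex) simp
  have "((1 - t) *\<^sub>R 1 + t *\<^sub>R (2 powr p)) powr (1/p) \<le> (1 - t) * 1 powr (1/p) + t * (2 powr p) powr (1/p)"
    using convex_onD[OF cv, of t 1 "2 powr p"] t by simp
  also have "\<dots> = 1 + t" using p by (simp add: powr_powr)
  finally have h: "(1 + (2 powr p - 1) * t) powr (1/p) \<le> 1 + t" by (simp add: algebra_simps)
  have pos: "0 \<le> 1 + (2 powr p - 1) * t"
    using t p by (simp add: ge_one_powr_ge_zero)
  have "1 + (2 powr p - 1) * t = ((1 + (2 powr p - 1) * t) powr (1/p)) powr p"
    using p pos by (simp add: powr_powr)
  also have "\<dots> \<le> (1 + t) powr p" using h p by (intro powr_mono2) auto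
  finally show ?thesis .
qed

lemma g_ge:
  fixes p u :: real
  assumes p: "0 < p" "p \<le> 1" and u: "0 \<le> u"
  shows "2 \<le> \<bar>1 - u\<bar> powr p + (1 + u) powr p + (2 - 2 powr p) * u powr p"
proof (cases "u \<le> 1")
  case True
  have a: "1 - u \<le> \<bar>1 - u\<bar> powr p"
    using powr_mono'[of p 1 "1-u"] p u True by simp
  have b: "u \<le> u powr p"
    using powr_mono'[of p 1 u] p u True by simp
  have c: "2 powr p \<le> 2" using powr_mono[of p 1 2] p by simp
  have "(2 - 2 powr p) * u \<le> (2 - 2 powr p) * u powr p" using b c by (intro mult_left_mono) auto
  then show ?thesis using a chord_powr[OF p u True] by (simp add: algebra_simps)
next
  case False
  have a: "2 powr p \<le> (1 + u) powr p" using False p by (intro powr_mono2) auto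
  have b: "1 \<le> u powr p" using False p by (intro ge_one_powr_ge_zero) auto
  have c: "2 powr p \<le> 2" using powr_mono[of p 1 2] p by simp
  have "(2 - 2 powr p) * 1 \<le> (2 - 2 powr p) * u powr p" using b c by (intro mult_left_mono) auto
  then show ?thesis using a powr_ge_zero[of "\<bar>1 - u\<bar>" p] by (smt (verit))
qed

definition Fg :: "real \<Rightarrow> real \<Rightarrow> real \<Rightarrow> real \<Rightarrow> real \<Rightarrow> real \<Rightarrow> real" where
  "Fg p A B a b c = \<bar>a - c\<bar> powr p * A + \<bar>b + c\<bar> powr p * A + \<bar>c\<bar> powr p * B"

definition Gg :: "real \<Rightarrow> real \<Rightarrow> real \<Rightarrow> real \<Rightarrow> real \<Rightarrow> real" where
  "Gg p A B a b = Inf (range (Fg p A B a b))"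

definition Ng :: "real \<Rightarrow> real \<Rightarrow> real \<Rightarrow> 'a \<Rightarrow> 'a \<Rightarrow> ('a \<Rightarrow> real) \<Rightarrow> real" where
  "Ng p A B x y \<mu> = Gg p A B (\<mu> x) (\<mu> y) powr (1 / p)"

lemma Fg_nonneg: "0 \<le> A \<Longrightarrow> 0 \<le> B \<Longrightarrow> 0 \<le> Fg p A B a b c"
  unfolding Fg_def by simp

lemma Gg_le: "0 \<le> A \<Longrightarrow> 0 \<le> B \<Longrightarrow> Gg p A B a b \<le> Fg p A B a b c"
  unfolding Gg_def by (rule cInf_lower) (auto intro!: bdd_belowI[of _ 0] Fg_nonneg)

lemma Gg_ge: "(\<And>c. K \<le> Fg p A B a b c) \<Longrightarrow> K \<le> Gg p A B a b"
  unfolding Gg_def by (rule cInf_greatest) auto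

lemma Gg_nonneg: "0 \<le> A \<Longrightarrow> 0 \<le> B \<Longrightarrow> 0 \<le> Gg p A B a b"
  by (rule Gg_ge) (rule Fg_nonneg)

lemma Gg_zero: "0 < p \<Longrightarrow> 0 \<le> A \<Longrightarrow> 0 \<le> B \<Longrightarrow> Gg p A B 0 0 = 0"
  using Gg_le[of A B p 0 0 0] Gg_nonneg[of A B p 0 0] by (simp add: Fg_def)

lemma Fg_scale:
  assumes "0 < p"
  shows "Fg p A B (k * a) (k * b) (k * c) = \<bar>k\<bar> powr p * Fg p A B a b c"
proof -
  have 1: "\<bar>k * a - k * c\<bar> = \<bar>k\<bar> * \<bar>a - c\<bar>" by (simp add: abs_mult[symmetric] algebra_simps)
  have 2: "\<bar>k * b + k * c\<bar> = \<bar>k\<bar> * \<bar>b + c\<bar>" by (simp add: abs_mult[symmetric] algebra_simps)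
  show ?thesis unfolding Fg_def 1 2 by (simp add: abs_mult powr_mult algebra_simps)
qed

lemma Gg_scale_le:
  assumes p: "0 < p" and AB: "0 \<le> A" "0 \<le> B"
  shows "Gg p A B (k * a) (k * b) \<le> \<bar>k\<bar> powr p * Gg p A B a b"
proof (cases "k = 0")
  case True
  then show ?thesis using Gg_zero[OF p AB] by simp
next
  case False
  have kp: "0 < \<bar>k\<bar> powr p" using False by simp
  have "Gg p A B (k * a) (k * b) / \<bar>k\<bar> powr p \<le> Gg p A B a b"
  proof (rule Gg_ge)
    fix c
    have "Gg p A B (k * a) (k * b) \<le> Fg p A B (k * a) (k * b) (k * c)" by (rule Gg_le[OF AB])
    also have "\<dots> = \<bar>k\<bar> powr p * Fg p A B a b c" by (rule Fg_scale[OF p])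
    finally show "Gg p A B (k * a) (k * b) / \<bar>k\<bar> powr p \<le> Fg p A B a b c"
      using kp by (simp add: divide_le_eq mult.commute)
  qed
  then show ?thesis using kp by (simp add: divide_le_eq mult.commute)
qed

lemma Gg_scale:
  assumes p: "0 < p" and AB: "0 \<le> A" "0 \<le> B"
  shows "Gg p A B (k * a) (k * b) = \<bar>k\<bar> powr p * Gg p A B a b"
proof (cases "k = 0")
  case True
  then show ?thesis using Gg_zero[OF p AB] by simp
next
  case False
  have "Gg p A B ((1/k) * (k * a)) ((1/k) * (k * b)) \<le> \<bar>1/k\<bar> powr p * Gg p A B (k * a) (k * b)"
    by (rule Gg_scale_le[OF p AB])
  then have "Gg p A B a b \<le> \<bar>1/k\<bar> powr p * Gg p A B (k * a) (k * b)" using False by simp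
  then have "\<bar>k\<bar> powr p * Gg p A B a b \<le> \<bar>k\<bar> powr p * (\<bar>1/k\<bar> powr p * Gg p A B (k * a) (k * b))"
    by (intro mult_left_mono) auto
  also have "\<dots> = Gg p A B (k * a) (k * b)"
    using False by (simp add: powr_mult[symmetric] abs_mult[symmetric])
  finally show ?thesis using Gg_scale_le[OF p AB, of k a b] by simp
qed

lemma aux_subadd:
  fixes p u v A :: real
  assumes p: "0 < p" "p \<le> 1" and A: "0 \<le> A"
  shows "\<bar>u + v\<bar> powr p * A \<le> \<bar>u\<bar> powr p * A + \<bar>v\<bar> powr p * A"
  using mult_right_mono[OF abs_powr_subadd[OF p, of u v] A] by (simp add: algebra_simps)

lemma Fg_subadd:
  assumes p: "0 < p" "p \<le> 1" and AB: "0 \<le> A" "0 \<le> B"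
  shows "Fg p A B (a1 + a2) (b1 + b2) (c1 + c2) \<le> Fg p A B a1 b1 c1 + Fg p A B a2 b2 c2"
proof -
  have e1: "a1 + a2 - (c1 + c2) = (a1 - c1) + (a2 - c2)" by simp
  have e2: "b1 + b2 + (c1 + c2) = (b1 + c1) + (b2 + c2)" by simp
  have 1: "\<bar>a1 + a2 - (c1 + c2)\<bar> powr p * A \<le> \<bar>a1 - c1\<bar> powr p * A + \<bar>a2 - c2\<bar> powr p * A"
    unfolding e1 by (rule aux_subadd[OF p AB(1)])
  have 2: "\<bar>b1 + b2 + (c1 + c2)\<bar> powr p * A \<le> \<bar>b1 + c1\<bar> powr p * A + \<bar>b2 + c2\<bar> powr p * A"
    unfolding e2 by (rule aux_subadd[OF p AB(1)])
  have 3: "\<bar>c1 + c2\<bar> powr p * B \<le> \<bar>c1\<bar> powr p * B + \<bar>c2\<bar> powr p * B"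
    by (rule aux_subadd[OF p AB(2)])
  show ?thesis using 1 2 3 unfolding Fg_def by linarith
qed

lemma Gg_subadd:
  assumes p: "0 < p" "p \<le> 1" and AB: "0 \<le> A" "0 \<le> B"
  shows "Gg p A B (a1 + a2) (b1 + b2) \<le> Gg p A B a1 b1 + Gg p A B a2 b2"
proof -
  have "Gg p A B (a1 + a2) (b1 + b2) - Gg p A B a1 b1 \<le> Gg p A B a2 b2"
  proof (rule Gg_ge)
    fix c2
    have "Gg p A B (a1 + a2) (b1 + b2) - Fg p A B a2 b2 c2 \<le> Gg p A B a1 b1"
    proof (rule Gg_ge)
      fix c1
      have "Gg p A B (a1 + a2) (b1 + b2) \<le> Fg p A B (a1 + a2) (b1 + b2) (c1 + c2)" by (rule Gg_le[OF AB])
      also have "\<dots> \<le> Fg p A B a1 b1 c1 + Fg p A B a2 b2 c2" by (rule Fg_subadd[OF p AB])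
      finally show "Gg p A B (a1 + a2) (b1 + b2) - Fg p A B a2 b2 c2 \<le> Fg p A B a1 b1 c1" by simp
    qed
    then show "Gg p A B (a1 + a2) (b1 + b2) - Gg p A B a1 b1 \<le> Fg p A B a2 b2 c2" by simp
  qed
  then show ?thesis by simp
qed

lemma Ng_seminorm:
  assumes p: "0 < p" "p \<le> 1" and AB: "0 \<le> A" "0 \<le> B"
  shows "p_seminorm_on p V (Ng p A B x y)"
  unfolding p_seminorm_on_def
proof (intro conjI ballI allI)
  fix \<mu> show "0 \<le> Ng p A B x y \<mu>" by (simp add: Ng_def)
next
  fix c \<mu>
  have "Ng p A B x y (\<lambda>y. c * \<mu> y) = (\<bar>c\<bar> powr p * Gg p A B (\<mu> x) (\<mu> y)) powr (1/p)"
    unfolding Ng_def using Gg_scale[OF p(1) AB] by simp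
  also have "\<dots> = \<bar>c\<bar> * Ng p A B x y \<mu>"
    unfolding Ng_def using p by (simp add: powr_mult powr_powr Gg_nonneg[OF AB])
  finally show "Ng p A B x y (\<lambda>y. c * \<mu> y) = \<bar>c\<bar> * Ng p A B x y \<mu>" .
next
  fix \<mu> \<nu>
  have e: "\<And>G. 0 \<le> G \<Longrightarrow> (G powr (1/p)) powr p = G" using p by (simp add: powr_powr)
  show "Ng p A B x y (\<lambda>y. \<mu> y + \<nu> y) powr p \<le> Ng p A B x y \<mu> powr p + Ng p A B x y \<nu> powr p"
    unfolding Ng_def using e Gg_nonneg[OF AB] Gg_subadd[OF p AB] by simp
qed

lemma Ng_le:
  assumes p: "0 < p" and AB: "0 \<le> A" "0 \<le> B"
  shows "Ng p A B x y \<mu> \<le> Fg p A B (\<mu> x) (\<mu> y) c powr (1/p)"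
  unfolding Ng_def using p by (intro powr_mono2 Gg_le AB Gg_nonneg) auto

lemma adm_tri:
  "admissible p M d z N \<Longrightarrow> f \<in> molecules M z \<Longrightarrow> g \<in> molecules M z \<Longrightarrow>
    N (\<lambda>v. f v + g v) powr p \<le> N f powr p + N g powr p"
  unfolding admissible_def p_seminorm_on_def by blast

lemma adm_hom:
  "admissible p M d z N \<Longrightarrow> f \<in> molecules M z \<Longrightarrow> N (\<lambda>v. c * f v) = \<bar>c\<bar> * N f"
  unfolding admissible_def p_seminorm_on_def by blast

lemma adm_nonneg:
  "admissible p M d z N \<Longrightarrow> f \<in> molecules M z \<Longrightarrow> 0 \<le> N f"
  unfolding admissible_def p_seminorm_on_def by blast

lemma adm_lip:
  "admissible p M d z N \<Longrightarrow> a \<in> M \<Longrightarrow> b \<in> M \<Longrightarrow> N (\<lambda>w. dirac z a w - dirac z b w) \<le> d a b"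
  unfolding admissible_def by blast

lemma zero_adm:
  assumes "\<forall>a\<in>M. \<forall>b\<in>M. 0 \<le> d a b"
  shows "admissible p M d z (\<lambda>_. 0)"
  using assms unfolding admissible_def p_seminorm_on_def by simp

lemma Fp_ge:
  assumes "admissible p M d z N0" "\<And>N. admissible p M d z N \<Longrightarrow> N \<mu> \<le> K"
  shows "N0 \<mu> \<le> Fp_norm p M d z \<mu>"
  unfolding Fp_norm_def using assms by (intro cSup_upper bdd_aboveI[of _ K]) auto

lemma Fp_le:
  assumes "admissible p M d z N0" "\<And>N. admissible p M d z N \<Longrightarrow> N \<mu> \<le> K"
  shows "Fp_norm p M d z \<mu> \<le> K"
  unfolding Fp_norm_def using assms by (intro cSup_least) auto

lemma mol_intro:
  "{v. f v \<noteq> 0} \<subseteq> S \<Longrightarrow> finite S \<Longrightarrow> S \<subseteq> M - {z} \<Longrightarrow> f \<in> molecules M z"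
  unfolding molecules_def by (auto intro: finite_subset)

lemma rmetric_subset: "rmetric r M d \<Longrightarrow> N \<subseteq> M \<Longrightarrow> rmetric r N d"
  unfolding rmetric_def by blast

lemma rmetric_nonneg: "rmetric r M d \<Longrightarrow> \<forall>a\<in>M. \<forall>b\<in>M. 0 \<le> d a b"
  unfolding rmetric_def by blast

lemma powr_bound:
  fixes X K p :: real
  assumes "0 \<le> X" "0 < p" "X powr p \<le> K"
  shows "X \<le> K powr (1/p)"
proof -
  have "X = (X powr p) powr (1/p)" using assms by (simp add: powr_powr)
  also have "\<dots> \<le> K powr (1/p)" using assms by (intro powr_mono2) auto
  finally show ?thesis .
qed

lemma construction:
  fixes p q :: real and z x y w :: 'a
  assumes p: "0 < p" "p < 1" and q: "p \<le> q" "q \<le> 1"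
    and dist: "z \<noteq> x" "z \<noteq> y" "z \<noteq> w" "x \<noteq> y" "x \<noteq> w" "y \<noteq> w"
  shows "\<exists>d. pointed_rmetric q {z, x, y} d z \<and> rmetric q {z, x, y, w} d \<and>
     amen p {z, x, y} {z, x, y, w} d z \<ge>
       ereal ((2 * 2 powr (p / q) /
                 (2 powr p * (2 - (2 - 2 powr p) powr (q / p)) powr (p / q) + 2 * (2 - 2 powr p)))
                 powr (1 / p))"
proof -
  have q0: "0 < q" using p q by simp
  define P where "P = (2::real) powr p"
  have P1: "1 < P" using p by (simp add: P_def)
  have P2: "P < 2" using p powr_less_mono[of p 1 2] by (simp add: P_def)
  define E where "E = (2 - P) powr (q / p)"
  have E0: "0 < E" using P2 by (simp add: E_def)
  have E1: "E < 1" unfolding E_def using P1 P2 p q0 by (subst powr01_less_one) auto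
  define s where "s = (2::real) powr (1 / q)"
  define e where "e = (2 - P) powr (1 / p)"
  define D where "D = s * e"
  define r where "r = (2 - E) powr (1 / q)"
  have s0: "0 < s" and e0: "0 < e" and D0: "0 < D" and r0: "0 < r"
    using P2 E1 by (auto simp: s_def e_def D_def r_def)
  have sq: "s powr q = 2" using q0 by (simp add: s_def powr_powr)
  have eq: "e powr q = E" using p by (simp add: e_def E_def powr_powr)
  have Dq: "D powr q = 2 * E" using s0 e0 by (simp add: D_def powr_mult sq eq)
  have rq: "r powr q = 2 - E" using q0 E1 by (simp add: r_def powr_powr)
  have sp: "s powr p = 2 powr (p / q)" by (simp add: s_def powr_powr)
  have ep: "e powr p = 2 - P" using p P2 by (simp add: e_def powr_powr)
  have Dp: "D powr p = 2 powr (p / q) * (2 - P)" using s0 e0 by (simp add: D_def powr_mult sp ep)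
  have rp: "r powr p = (2 - E) powr (p / q)" using E1 by (simp add: r_def powr_powr)
  define d where "d = (\<lambda>u v. if u = v then 0
     else if (u = z \<and> v = x) \<or> (u = x \<and> v = z) \<or> (u = z \<and> v = y) \<or> (u = y \<and> v = z) then s
     else if (u = x \<and> v = y) \<or> (u = y \<and> v = x) then D
     else if (u = x \<and> v = w) \<or> (u = w \<and> v = x) \<or> (u = y \<and> v = w) \<or> (u = w \<and> v = y) then e
     else r)"
  have dM: "rmetric q {z, x, y, w} d"
    unfolding rmetric_def ball_simps
    apply (intro conjI)
    using s0 e0 D0 r0 E0 E1 apply (simp_all add: d_def dist dist[symmetric] sq eq Dq rq less_imp_le)
    done
  have d0: "\<forall>a\<in>{z, x, y, w}. \<forall>b\<in>{z, x, y, w}. 0 \<le> d a b"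
    using rmetric_nonneg[OF dM] .
  have dN: "rmetric q {z, x, y} d"
    by (rule rmetric_subset[OF dM]) blast
  define \<mu>0 where "\<mu>0 = (\<lambda>v::'a. if v = x \<or> v = y then (1::real) else 0)"
  have mol0: "\<mu>0 \<in> molecules {z, x, y} z"
    by (rule mol_intro[of _ "{x, y}"]) (use dist in \<open>auto simp: \<mu>0_def\<close>)
  define A where "A = s powr p"
  define B where "B = D powr p"
  have A0: "0 \<le> A" and B0: "0 \<le> B" by (simp_all add: A_def B_def)
  have As: "A powr (1/p) = s" using s0 p by (simp add: A_def powr_powr)
  have BD: "B powr (1/p) = D" using D0 p by (simp add: B_def powr_powr)
  have BA: "B = (2 - P) * A" by (simp add: A_def B_def sp Dp)
  have admN: "admissible p {z, x, y} d z (Ng p A B x y)"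
    unfolding admissible_def
  proof (intro conjI ballI)
    show "p_seminorm_on p (molecules {z, x, y} z) (Ng p A B x y)"
      using Ng_seminorm[of p A B] p A0 B0 by simp
  next
    fix a b assume a: "a \<in> {z, x, y}" and b: "b \<in> {z, x, y}"
    note L0 = Ng_le[OF p(1) A0 B0, of x y "\<lambda>w. dirac z a w - dirac z b w" 0]
    note L1 = Ng_le[OF p(1) A0 B0, of x y "\<lambda>w. dirac z a w - dirac z b w" 1]
    note L2 = Ng_le[OF p(1) A0 B0, of x y "\<lambda>w. dirac z a w - dirac z b w" "-1"]
    have dz: "dirac z z = (\<lambda>_. 0)" by (simp add: dirac_def fun_eq_iff)
    have dx: "dirac z x x = 1" "dirac z x y = 0" "dirac z y x = 0" "dirac z y y = 1"
      using dist by (auto simp: dirac_def)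
    have dxy: "d x z = s" "d z x = s" "d y z = s" "d z y = s" "d x y = D" "d y x = D" "\<And>a. d a a = 0"
      using dist by (auto simp: d_def)
    have F: "Fg p A B 0 0 0 = 0" "Fg p A B 1 0 0 = A" "Fg p A B (-1) 0 0 = A"
       "Fg p A B 0 1 0 = A" "Fg p A B 0 (-1) 0 = A" "Fg p A B 1 (-1) 1 = B" "Fg p A B (-1) 1 (-1) = B"
      by (simp_all add: Fg_def)
    have z0: "(0::real) powr (1/p) = 0" by simp
    from a b consider "a = b" | "a = x \<and> b = z" | "a = z \<and> b = x" | "a = y \<and> b = z"
      | "a = z \<and> b = y" | "a = x \<and> b = y" | "a = y \<and> b = x" by blast
    then show "Ng p A B x y (\<lambda>w. dirac z a w - dirac z b w) \<le> d a b"
    proof cases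
      case 1 then show ?thesis using L0 by (simp only: dxy diff_self F z0)
    next
      case 2 then show ?thesis using L0 by (simp add: dxy dz dx F As)
    next
      case 3 then show ?thesis using L0 by (simp add: dxy dz dx F As)
    next
      case 4 then show ?thesis using L0 by (simp add: dxy dz dx F As)
    next
      case 5 then show ?thesis using L0 by (simp add: dxy dz dx F As)
    next
      case 6 then show ?thesis using L1 by (simp add: dxy dz dx F BD)
    next
      case 7 then show ?thesis using L2 by (simp add: dxy dz dx F BD)
    qed
  qed
  have lowN: "(2 * A) powr (1/p) \<le> Ng p A B x y \<mu>0"
  proof -
    have "2 * A \<le> Gg p A B 1 1"
    proof (rule Gg_ge)
      fix c :: real
      have g: "2 \<le> \<bar>1 - \<bar>c\<bar>\<bar> powr p + (1 + \<bar>c\<bar>) powr p + (2 - P) * \<bar>c\<bar> powr p"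
        using g_ge[of p "\<bar>c\<bar>"] p by (simp add: P_def)
      have "\<bar>1 - \<bar>c\<bar>\<bar> powr p + (1 + \<bar>c\<bar>) powr p = \<bar>1 - c\<bar> powr p + \<bar>1 + c\<bar> powr p"
        by (cases "c \<ge> 0") (auto simp: abs_if)
      then have "2 \<le> \<bar>1 - c\<bar> powr p + \<bar>1 + c\<bar> powr p + (2 - P) * \<bar>c\<bar> powr p" using g by linarith
      then have "2 * A \<le> (\<bar>1 - c\<bar> powr p + \<bar>1 + c\<bar> powr p + (2 - P) * \<bar>c\<bar> powr p) * A"
        using A0 by (intro mult_right_mono) auto
      then show "2 * A \<le> Fg p A B 1 1 c" by (simp add: Fg_def BA algebra_simps)
    qed
    then show ?thesis unfolding Ng_def \<mu>0_def using dist p A0 by (auto intro: powr_mono2)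
  qed
  have A_pos: "0 < A" using s0 by (simp add: A_def)
  define LB where "LB = (2 * A) powr (1/p)"
  define UB where "UB = (2 * (2 - P) + 2 powr p * (2 - E) powr (p/q)) powr (1/p)"
  have dz: "dirac z z = (\<lambda>_. 0)" by (simp add: dirac_def fun_eq_iff)
  have mol0M: "\<mu>0 \<in> molecules {z, x, y, w} z"
    by (rule mol_intro[of _ "{x, y}"]) (use dist in \<open>auto simp: \<mu>0_def\<close>)
  have upM: "N \<mu>0 \<le> UB" if adm: "admissible p {z, x, y, w} d z N" for N
  proof -
    define f1 where "f1 = (\<lambda>v. dirac z x v - dirac z w v)"
    define f2 where "f2 = (\<lambda>v. dirac z y v - dirac z w v)"
    define f3 where "f3 = (\<lambda>v. dirac z w v - dirac z z v)"
    have m1: "f1 \<in> molecules {z, x, y, w} z"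
      by (rule mol_intro[of _ "{x, w}"]) (use dist in \<open>auto simp: f1_def dirac_def\<close>)
    have m2: "f2 \<in> molecules {z, x, y, w} z"
      by (rule mol_intro[of _ "{y, w}"]) (use dist in \<open>auto simp: f2_def dirac_def\<close>)
    have m3: "f3 \<in> molecules {z, x, y, w} z"
      by (rule mol_intro[of _ "{w}"]) (use dist in \<open>auto simp: f3_def dirac_def\<close>)
    have m3': "(\<lambda>v. 2 * f3 v) \<in> molecules {z, x, y, w} z"
      by (rule mol_intro[of _ "{w}"]) (use dist in \<open>auto simp: f3_def dirac_def\<close>)
    have m23: "(\<lambda>v. f2 v + 2 * f3 v) \<in> molecules {z, x, y, w} z"
      by (rule mol_intro[of _ "{y, w}"]) (use dist in \<open>auto simp: f2_def f3_def dirac_def\<close>)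
    have eq\<mu>: "\<mu>0 = (\<lambda>v. f1 v + (f2 v + 2 * f3 v))"
      using dist by (auto simp: fun_eq_iff \<mu>0_def f1_def f2_def f3_def dirac_def)
    have dd: "d x w = e" "d y w = e" "d w z = r" using dist by (auto simp: d_def)
    have n1: "N f1 \<le> e" unfolding f1_def using adm_lip[OF adm, of x w] dd by simp
    have n2: "N f2 \<le> e" unfolding f2_def using adm_lip[OF adm, of y w] dd by simp
    have n3: "N f3 \<le> r" unfolding f3_def using adm_lip[OF adm, of w z] dd by simp
    have h3: "N (\<lambda>v. 2 * f3 v) = 2 * N f3" using adm_hom[OF adm m3, of 2] by simp
    have t1: "N \<mu>0 powr p \<le> N f1 powr p + N (\<lambda>v. f2 v + 2 * f3 v) powr p"
      unfolding eq\<mu> by (rule adm_tri[OF adm m1 m23])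
    have t2: "N (\<lambda>v. f2 v + 2 * f3 v) powr p \<le> N f2 powr p + N (\<lambda>v. 2 * f3 v) powr p"
      by (rule adm_tri[OF adm m2 m3'])
    have u1: "N f1 powr p \<le> 2 - P"
      using powr_mono2[of p "N f1" e] n1 adm_nonneg[OF adm m1] p ep by simp
    have u2: "N f2 powr p \<le> 2 - P"
      using powr_mono2[of p "N f2" e] n2 adm_nonneg[OF adm m2] p ep by simp
    have u3: "N (\<lambda>v. 2 * f3 v) powr p \<le> 2 powr p * (2 - E) powr (p/q)"
    proof -
      have "N (\<lambda>v. 2 * f3 v) powr p \<le> (2 * r) powr p"
        unfolding h3 using n3 adm_nonneg[OF adm m3] p by (intro powr_mono2) auto
      also have "\<dots> = 2 powr p * (2 - E) powr (p/q)" using r0 by (simp add: powr_mult rp)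
      finally show ?thesis .
    qed
    have "N \<mu>0 powr p \<le> 2 * (2 - P) + 2 powr p * (2 - E) powr (p/q)"
      using t1 t2 u1 u2 u3 by (smt (verit))
    moreover have "0 \<le> N \<mu>0" using adm_nonneg[OF adm mol0M] .
    ultimately show ?thesis unfolding UB_def using powr_bound p by blast
  qed
  have upN: "N \<mu>0 \<le> LB" if adm: "admissible p {z, x, y} d z N" for N
  proof -
    define f1 where "f1 = (\<lambda>v. dirac z x v - dirac z z v)"
    define f2 where "f2 = (\<lambda>v. dirac z y v - dirac z z v)"
    have m1: "f1 \<in> molecules {z, x, y} z"
      by (rule mol_intro[of _ "{x}"]) (use dist in \<open>auto simp: f1_def dirac_def\<close>)
    have m2: "f2 \<in> molecules {z, x, y} z"
      by (rule mol_intro[of _ "{y}"]) (use dist in \<open>auto simp: f2_def dirac_def\<close>)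
    have eq\<mu>: "\<mu>0 = (\<lambda>v. f1 v + f2 v)"
      using dist by (auto simp: fun_eq_iff \<mu>0_def f1_def f2_def dirac_def)
    have dd: "d x z = s" "d y z = s" using dist by (auto simp: d_def)
    have n1: "N f1 \<le> s" unfolding f1_def using adm_lip[OF adm, of x z] dd by simp
    have n2: "N f2 \<le> s" unfolding f2_def using adm_lip[OF adm, of y z] dd by simp
    have t1: "N \<mu>0 powr p \<le> N f1 powr p + N f2 powr p"
      unfolding eq\<mu> by (rule adm_tri[OF adm m1 m2])
    have u1: "N f1 powr p \<le> A"
      using powr_mono2[of p "N f1" s] n1 adm_nonneg[OF adm m1] p by (simp add: A_def)
    have u2: "N f2 powr p \<le> A"
      using powr_mono2[of p "N f2" s] n2 adm_nonneg[OF adm m2] p by (simp add: A_def)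
    have "N \<mu>0 powr p \<le> 2 * A" using t1 u1 u2 by linarith
    moreover have "0 \<le> N \<mu>0" using adm_nonneg[OF adm mol0] .
    ultimately show ?thesis unfolding LB_def using powr_bound p by blast
  qed
  have FN: "LB \<le> Fp_norm p {z, x, y} d z \<mu>0"
  proof -
    have "Ng p A B x y \<mu>0 \<le> Fp_norm p {z, x, y} d z \<mu>0"
      by (rule Fp_ge[OF admN]) (erule upN)
    then show ?thesis using lowN by (simp add: LB_def)
  qed
  have FM: "Fp_norm p {z, x, y, w} d z \<mu>0 \<le> UB"
    by (rule Fp_le[OF zero_adm[OF d0]]) (erule upM)
  have FM0: "0 \<le> Fp_norm p {z, x, y, w} d z \<mu>0"
  proof -
    have "(\<lambda>_. 0) \<mu>0 \<le> Fp_norm p {z, x, y, w} d z \<mu>0"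
      by (rule Fp_ge[OF zero_adm[OF d0]]) (erule upM)
    then show ?thesis by simp
  qed
  have LB0: "0 < LB" using A_pos by (simp add: LB_def)
  have UB0: "0 < UB"
  proof -
    have "0 < 2 * (2 - P) + 2 powr p * (2 - E) powr (p/q)" using P2 E1 by (intro add_pos_pos) auto
    then show ?thesis by (simp add: UB_def)
  qed
  have T: "(2 * 2 powr (p / q) /
                 (2 powr p * (2 - (2 - 2 powr p) powr (q / p)) powr (p / q) + 2 * (2 - 2 powr p)))
                 powr (1 / p) = LB / UB"
  proof -
    have "LB / UB = (2 * A / (2 * (2 - P) + 2 powr p * (2 - E) powr (p/q))) powr (1/p)"
      unfolding LB_def UB_def using A_pos P2 E1 by (subst powr_divide) auto
    then show ?thesis by (simp add: A_def sp E_def P_def add.commute)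
  qed
  have am: "ereal (LB / UB) \<le> amen p {z, x, y} {z, x, y, w} d z"
  proof (cases "\<exists>C. \<forall>\<mu>\<in>molecules {z, x, y} z. Fp_norm p {z, x, y} d z \<mu> \<le> C * Fp_norm p {z, x, y, w} d z \<mu>")
    case True
    then obtain C where C: "Fp_norm p {z, x, y} d z \<mu>0 \<le> C * Fp_norm p {z, x, y, w} d z \<mu>0"
      using mol0 by blast
    have FMp: "0 < Fp_norm p {z, x, y, w} d z \<mu>0"
    proof (rule ccontr)
      assume "\<not> ?thesis"
      then have "Fp_norm p {z, x, y, w} d z \<mu>0 = 0" using FM0 by simp
      then show False using C FN LB0 by simp
    qed
    have "LB / UB \<le> Fp_norm p {z, x, y} d z \<mu>0 / Fp_norm p {z, x, y, w} d z \<mu>0"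
      using LB0 FN FMp FM by (intro frac_le) auto
    moreover have "ereal (Fp_norm p {z, x, y} d z \<mu>0 / Fp_norm p {z, x, y, w} d z \<mu>0)
        \<le> Sup ({0} \<union> {ereal (Fp_norm p {z, x, y} d z \<mu> / Fp_norm p {z, x, y, w} d z \<mu>) | \<mu>.
                         \<mu> \<in> molecules {z, x, y} z \<and> (\<exists>x. \<mu> x \<noteq> 0)})"
    proof (intro Sup_upper UnI2)
      have "\<mu>0 x \<noteq> 0" by (simp add: \<mu>0_def)
      then show "ereal (Fp_norm p {z, x, y} d z \<mu>0 / Fp_norm p {z, x, y, w} d z \<mu>0)
        \<in> {ereal (Fp_norm p {z, x, y} d z \<mu> / Fp_norm p {z, x, y, w} d z \<mu>) | \<mu>.
                         \<mu> \<in> molecules {z, x, y} z \<and> (\<exists>x. \<mu> x \<noteq> 0)}"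
        using mol0 by blast
    qed
    ultimately have "ereal (LB / UB) \<le> Sup ({0} \<union> {ereal (Fp_norm p {z, x, y} d z \<mu> / Fp_norm p {z, x, y, w} d z \<mu>) | \<mu>.
                         \<mu> \<in> molecules {z, x, y} z \<and> (\<exists>x. \<mu> x \<noteq> 0)})"
      by (meson ereal_less_eq(3) order_trans)
    moreover have "amen p {z, x, y} {z, x, y, w} d z = Sup ({0} \<union> {ereal (Fp_norm p {z, x, y} d z \<mu> / Fp_norm p {z, x, y, w} d z \<mu>) | \<mu>.
                         \<mu> \<in> molecules {z, x, y} z \<and> (\<exists>x. \<mu> x \<noteq> 0)})"
      unfolding amen_def by (rule if_P[OF True])
    ultimately show ?thesis by simp
  next
    case False
    then show ?thesis unfolding amen_def by (subst if_not_P) auto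
  qed
  show ?thesis
    using dN dM am T by (auto simp: pointed_rmetric_def)
qed

lemma numeric:
  "2 powr (2/3 + 1) /
     (4 + 2 powr (2/3) * ((2 - (2 - 2 powr (2/3)) powr (1 / (2/3))) powr (2/3) - 2)) > (1::real)"
proof -
  define a :: real where "a = 2 powr (1/3)"
  have a0: "0 < a" by (simp add: a_def)
  have a3: "a ^ 3 = 2"
  proof -
    have "a powr 3 = 2" by (simp add: a_def powr_powr)
    then show ?thesis using a0 by simp
  qed
  have alo: "1.259 < a"
  proof (rule power_less_imp_less_base[of _ 3])
    show "1.259 ^ 3 < a ^ 3" using a3 by (simp add: power3_eq_cube)
  qed (use a0 in simp)
  have ahi: "a < 1.26"
  proof (rule power_less_imp_less_base[of _ 3])
    show "a ^ 3 < 1.26 ^ 3" using a3 by (simp add: power3_eq_cube)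
  qed simp
  have e1: "(2::real) powr (2/3) = a ^ 2"
  proof -
    have "(2::real) powr (2/3) = a powr 2" by (simp add: a_def powr_powr)
    then show ?thesis using a0 by simp
  qed
  have e2: "(2::real) powr (2/3 + 1) = 2 * a ^ 2" by (subst powr_add) (simp add: e1)
  have e3: "(1 / (2/3) :: real) = 1 + 1/2" by simp
  define b where "b = 2 - a ^ 2"
  have a2lo: "1.585081 < a ^ 2"
  proof -
    have "1.259 ^ 2 < a ^ 2" using alo by (intro power_strict_mono) auto
    then show ?thesis by (simp add: power2_eq_square)
  qed
  have a2hi: "a ^ 2 < 1.5876"
  proof -
    have "a ^ 2 < 1.26 ^ 2" using ahi a0 by (intro power_strict_mono) auto
    then show ?thesis by (simp add: power2_eq_square)
  qed
  have blo: "0.4124 < b" and bhi: "b < 0.415" using a2lo a2hi by (simp_all add: b_def)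
  have sb: "0.64 \<le> sqrt b" by (rule real_le_rsqrt) (use blo in \<open>simp add: power2_eq_square\<close>)
  have sb1: "sqrt b \<le> 1" using bhi by simp
  have e4: "b powr (1 + 1/2) = b * sqrt b" using blo by (subst powr_add) (simp add: powr_half_sqrt)
  define c where "c = 2 - b * sqrt b"
  have chi: "c \<le> 1.736064"
  proof -
    have "0.4124 * 0.64 \<le> b * sqrt b" using blo sb by (intro mult_mono) auto
    then show ?thesis by (simp add: c_def)
  qed
  have clo: "1 < c"
  proof -
    have "b * sqrt b \<le> 0.415 * 1" using bhi sb1 blo by (intro mult_mono) auto
    then show ?thesis by (simp add: c_def)
  qed
  define X where "X = c powr (2/3)"
  have X0: "0 \<le> X" by (simp add: X_def)
  have X3: "X ^ 3 = c ^ 2"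
  proof -
    have "X powr 3 = c powr 2" using clo by (simp add: X_def powr_powr)
    then show ?thesis using clo X0 by simp
  qed
  have Xlt: "X < 4 - 2 * a"
  proof (rule power_less_imp_less_base[of _ 3])
    have "c ^ 2 \<le> 1.736064 ^ 2" using chi clo by (intro power_mono) auto
    moreover have "(1.48::real) ^ 3 \<le> (4 - 2 * a) ^ 3" using ahi by (intro power_mono) auto
    ultimately show "X ^ 3 < (4 - 2 * a) ^ 3" using X3 by (simp add: power2_eq_square power3_eq_cube)
  qed (use ahi in simp)
  have key: "a ^ 2 * X < a ^ 2 * (4 - 2 * a)" using Xlt a0 by simp
  have key2: "a ^ 2 * (4 - 2 * a) = 4 * a ^ 2 - 4"
    using a3 by (simp add: algebra_simps power2_eq_square power3_eq_cube)
  have den: "0 < 4 + a ^ 2 * (X - 2)"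
  proof -
    have "0 \<le> a ^ 2 * X" using X0 by simp
    moreover have "4 + a ^ 2 * (X - 2) = (4 - 2 * a ^ 2) + a ^ 2 * X" by (simp add: algebra_simps)
    moreover have "a ^ 2 < 2" using a2hi by simp
    ultimately show ?thesis by linarith
  qed
  have "1 < 2 * a ^ 2 / (4 + a ^ 2 * (X - 2))"
    using den key key2 by (simp add: less_divide_eq algebra_simps)
  moreover have "(2 - (2 - 2 powr (2/3)) powr (1 / (2/3))) powr (2/3) = X"
    unfolding e1 e3 b_def[symmetric] e4 c_def[symmetric] X_def ..
  ultimately show ?thesis unfolding e2 e1 by simp
qed

lemma aa_ge:
  fixes p q :: real
  assumes p: "0 < p" "p < 1" and q: "p \<le> q" "q \<le> 1"
  shows "aa TYPE('a::infinite) p q 2 \<ge>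
              ereal ((2 * 2 powr (p / q) /
                 (2 powr p * (2 - (2 - 2 powr p) powr (q / p)) powr (p / q) + 2 * (2 - 2 powr p)))
                 powr (1 / p))"
proof -
  have inf: "\<not> finite (UNIV :: 'a set)" by (rule infinite_UNIV)
  obtain z :: 'a where True by blast
  obtain x :: 'a where x: "x \<notin> {z}" using ex_new_if_finite[OF inf, of "{z}"] by blast
  obtain y :: 'a where y: "y \<notin> {z, x}" using ex_new_if_finite[OF inf, of "{z, x}"] by blast
  obtain w :: 'a where w: "w \<notin> {z, x, y}" using ex_new_if_finite[OF inf, of "{z, x, y}"] by blast
  have dist: "z \<noteq> x" "z \<noteq> y" "z \<noteq> w" "x \<noteq> y" "x \<noteq> w" "y \<noteq> w" using x y w by auto
  obtain d where d: "pointed_rmetric q {z, x, y} d z" "rmetric q {z, x, y, w} d"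
    "amen p {z, x, y} {z, x, y, w} d z \<ge>
       ereal ((2 * 2 powr (p / q) /
                 (2 powr p * (2 - (2 - 2 powr p) powr (q / p)) powr (p / q) + 2 * (2 - 2 powr p)))
                 powr (1 / p))"
    using construction[OF p q dist] by blast
  have "amen p {z, x, y} {z, x, y, w} d z \<le> aa TYPE('a) p q 2"
    unfolding aa_def
  proof (rule Sup_upper)
    have "card ({z, x, y} - {z}) = 2" using dist by auto
    then show "amen p {z, x, y} {z, x, y, w} d z \<in> {amen p N M d z | (N :: 'a set) M d z.
      pointed_rmetric q N d z \<and> finite (N - {z}) \<and> card (N - {z}) \<le> 2 \<and>
      rmetric q M d \<and> N \<subseteq> M}"
      using d by fastforce
  qed
  then show ?thesis using d(3) by simp
qed

theorem proposition3p24: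
  shows "(\<forall>p q. 0 < p \<and> p < 1 \<and> p \<le> q \<and> q \<le> 1 \<longrightarrow>
            aa TYPE('a::infinite) p q 2 \<ge>
              ereal ((2 * 2 powr (p / q) /
                 (2 powr p * (2 - (2 - 2 powr p) powr (q / p)) powr (p / q) + 2 * (2 - 2 powr p)))
                 powr (1 / p))) \<and>
         (\<forall>p. 0 < p \<and> p < 1 \<longrightarrow>
            aa TYPE('a) p p 2 \<ge> ereal (4 / (4 + 2 powr p * (2 powr p - 2)))) \<and>
         (\<forall>p. 0 < p \<and> p < 1 \<and>
            2 powr (p + 1) / (4 + 2 powr p * ((2 - (2 - 2 powr p) powr (1 / p)) powr p - 2)) > 1
            \<longrightarrow> aa TYPE('a) p 1 2 > 1) \<and>
         (2 powr (2/3 + 1) /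
            (4 + 2 powr (2/3) * ((2 - (2 - 2 powr (2/3)) powr (1 / (2/3))) powr (2/3) - 2)) > (1::real))"
proof (intro conjI allI impI)
  fix p q :: real
  assume "0 < p \<and> p < 1 \<and> p \<le> q \<and> q \<le> 1"
  then show "aa TYPE('a::infinite) p q 2 \<ge>
              ereal ((2 * 2 powr (p / q) /
                 (2 powr p * (2 - (2 - 2 powr p) powr (q / p)) powr (p / q) + 2 * (2 - 2 powr p)))
                 powr (1 / p))" using aa_ge by blast
next
  fix p :: real
  assume h: "0 < p \<and> p < 1"
  define P where "P = (2::real) powr p"
  have P1: "1 < P" using h by (simp add: P_def)
  have P2: "P < 2" using h powr_less_mono[of p 1 2] by (simp add: P_def)
  define \<beta> where "\<beta> = 4 / (4 + P * (P - 2))"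
  have den: "0 < 4 + P * (P - 2)"
  proof -
    have "4 + P * (P - 2) = (P - 1) * (P - 1) + 3" by (simp add: algebra_simps)
    moreover have "0 \<le> (P - 1) * (P - 1)" by simp
    ultimately show ?thesis by linarith
  qed
  have b1: "1 \<le> \<beta>"
  proof -
    have "P * (P - 2) \<le> 0" using P1 P2 by (simp add: mult_nonneg_nonpos)
    then show ?thesis using den by (simp add: \<beta>_def le_divide_eq)
  qed
  have T: "(2 * 2 powr (p / p) /
                 (2 powr p * (2 - (2 - 2 powr p) powr (p / p)) powr (p / p) + 2 * (2 - 2 powr p)))
                 powr (1 / p) = \<beta> powr (1 / p)"
  proof -
    have "p / p = 1" using h by simp
    then show ?thesis using P1 P2 unfolding \<beta>_def P_def[symmetric]
      by (simp add: powr_one algebra_simps)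
  qed
  have "ereal \<beta> \<le> ereal (\<beta> powr (1/p))"
  proof -
    have "\<beta> powr 1 \<le> \<beta> powr (1/p)" using h b1 by (intro powr_mono) auto
    then show ?thesis using b1 by (simp add: powr_one)
  qed
  also have "\<dots> \<le> aa TYPE('a) p p 2" using aa_ge[of p p] h T by simp
  finally show "aa TYPE('a) p p 2 \<ge> ereal (4 / (4 + 2 powr p * (2 powr p - 2)))"
    by (simp add: \<beta>_def P_def)
next
  fix p :: real
  assume h: "0 < p \<and> p < 1 \<and>
            2 powr (p + 1) / (4 + 2 powr p * ((2 - (2 - 2 powr p) powr (1 / p)) powr p - 2)) > 1"
  define P where "P = (2::real) powr p"
  define X where "X = (2 - (2 - P) powr (1 / p)) powr p"
  have e: "(2::real) powr (p + 1) = 2 * P" by (simp add: powr_add P_def)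
  have hyp: "1 < 2 * P / (4 + P * (X - 2))"
    using h unfolding e P_def[symmetric] X_def[symmetric] by simp
  have T: "(2 * 2 powr (p / 1) /
                 (2 powr p * (2 - (2 - 2 powr p) powr (1 / p)) powr (p / 1) + 2 * (2 - 2 powr p)))
                 powr (1 / p) = (2 * P / (4 + P * (X - 2))) powr (1 / p)"
    by (simp add: X_def P_def algebra_simps)
  have "1 < (2 * P / (4 + P * (X - 2))) powr (1 / p)" using hyp h by simp
  then have "ereal 1 < ereal ((2 * P / (4 + P * (X - 2))) powr (1 / p))" by simp
  also have "\<dots> \<le> aa TYPE('a) p 1 2" using aa_ge[of p 1] h T by simp
  finally show "aa TYPE('a) p 1 2 > 1" by (simp add: one_ereal_def)
next
  show "2 powr (2/3 + 1) /
            (4 + 2 powr (2/3) * ((2 - (2 - 2 powr (2/3)) powr (1 / (2/3))) powr (2/3) - 2)) > (1::real)"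
    by (rule numeric)
qed

end
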